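(* Let $n\ge1$ and let $\phi,\psi$ be characters of $S_n$. Then $d_\phi^{S_n}(A)=d_\psi^{S_n}(A)$ for every $A\in\mathbb S_n(\mathbb C)$ if and only if $\phi=\psi$.
   Context: A character of a group $G\le S_n$ is a function $g\mapsto\operatorname{tr}(\rho(g))$ for some homomorphism $\rho:G\to GL_m(\mathbb C)$, $m\ge1$. $\mathbb S_n(\mathbb C)$ is the set of complex symmetric $n\times n$ matrices. For $\chi:S_n\to\mathbb C$, $d_\chi^{S_n}(A)=\sum_{\sigma\in S_n}\chi(\sigma)\prod_{i=1}^n A_{i\,\sigma(i)}$. *)

theory Defs
  imports "HOL-Combinatorics.Permutations" "Jordan_Normal_Form.Matrix"
begin

definition mat_trace :: "'a::comm_monoid_add mat \<Rightarrow> 'a" where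
  "mat_trace A = (\<Sum>i<dim_row A. A $$ (i, i))"

definition is_character :: "nat \<Rightarrow> ((nat \<Rightarrow> nat) \<Rightarrow> complex) \<Rightarrow> bool" where
  "is_character n \<chi> \<longleftrightarrow>
     (\<exists>m\<ge>1. \<exists>\<rho> :: (nat \<Rightarrow> nat) \<Rightarrow> complex mat.
        (\<forall>\<sigma>. \<sigma> permutes {..<n} \<longrightarrow> \<rho> \<sigma> \<in> carrier_mat m m \<and> invertible_mat (\<rho> \<sigma>)) \<and>
        (\<forall>\<sigma> \<tau>. \<sigma> permutes {..<n} \<longrightarrow> \<tau> permutes {..<n} \<longrightarrow> \<rho> (\<sigma> \<circ> \<tau>) = \<rho> \<sigma> * \<rho> \<tau>) \<and>
        (\<forall>\<sigma>. \<sigma> permutes {..<n} \<longrightarrow> \<chi> \<sigma> = mat_trace (\<rho> \<sigma>)))"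

definition gen_mat_fun :: "nat \<Rightarrow> ((nat \<Rightarrow> nat) \<Rightarrow> complex) \<Rightarrow> complex mat \<Rightarrow> complex" where
  "gen_mat_fun n \<chi> A = (\<Sum>\<sigma>\<in>{\<sigma>. \<sigma> permutes {..<n}}. \<chi> \<sigma> * (\<Prod>i<n. A $$ (i, \<sigma> i)))"

end

theory Submission
  imports Defs "HOL-Combinatorics.Cycles"
begin


lemma mat_trace_comm:
  fixes A B :: "'a::comm_ring mat"
  assumes "A \<in> carrier_mat m m" "B \<in> carrier_mat m m"
  shows "mat_trace (A * B) = mat_trace (B * A)"
proof -
  have "mat_trace (A * B) = (\<Sum>i<m. \<Sum>k<m. A $$ (i,k) * B $$ (k,i))"
    using assms by (simp add: mat_trace_def scalar_prod_def atLeast0LessThan)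
  also have "\<dots> = (\<Sum>k<m. \<Sum>i<m. B $$ (k,i) * A $$ (i,k))"
    by (subst sum.swap) (simp add: mult.commute)
  also have "\<dots> = mat_trace (B * A)"
    using assms by (simp add: mat_trace_def scalar_prod_def atLeast0LessThan)
  finally show ?thesis .
qed

lemma character_class:
  assumes "is_character n ch" "g permutes {..<n}" "\<sigma> permutes {..<n}"
  shows "ch (g \<circ> \<sigma> \<circ> Hilbert_Choice.inv g) = ch \<sigma>"
proof -
  obtain m \<rho> where car: "\<And>\<sigma>. \<sigma> permutes {..<n} \<Longrightarrow> \<rho> \<sigma> \<in> carrier_mat m m"
    and hom: "\<And>\<sigma> \<tau>. \<sigma> permutes {..<n} \<Longrightarrow> \<tau> permutes {..<n} \<Longrightarrow> \<rho> (\<sigma> \<circ> \<tau>) = \<rho> \<sigma> * \<rho> \<tau>"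
    and tr: "\<And>\<sigma>. \<sigma> permutes {..<n} \<Longrightarrow> ch \<sigma> = mat_trace (\<rho> \<sigma>)"
    using assms(1) unfolding is_character_def by blast
  have gi: "Hilbert_Choice.inv g permutes {..<n}" using assms(2) by (rule permutes_inv)
  have si: "\<sigma> \<circ> Hilbert_Choice.inv g permutes {..<n}" using assms(3) gi by (rule permutes_compose[rotated])
  have "ch (g \<circ> \<sigma> \<circ> Hilbert_Choice.inv g) = mat_trace (\<rho> (g \<circ> (\<sigma> \<circ> Hilbert_Choice.inv g)))"
    using tr[OF permutes_compose[OF si assms(2)]] by (simp add: o_assoc)
  also have "\<dots> = mat_trace (\<rho> g * \<rho> (\<sigma> \<circ> Hilbert_Choice.inv g))" using hom[OF assms(2) si] by simp
  also have "\<dots> = mat_trace (\<rho> (\<sigma> \<circ> Hilbert_Choice.inv g) * \<rho> g)"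
    by (rule mat_trace_comm[OF car[OF assms(2)] car[OF si]])
  also have "\<dots> = mat_trace (\<rho> ((\<sigma> \<circ> Hilbert_Choice.inv g) \<circ> g))" using hom[OF si assms(2)] by simp
  also have "(\<sigma> \<circ> Hilbert_Choice.inv g) \<circ> g = \<sigma>"
    using permutes_inv_o(2)[OF assms(2)] by (simp add: o_assoc[symmetric])
  finally show ?thesis using tr[OF assms(3)] by (simp add: comp_def)
qed



lemma edges_conj:
  fixes \<sigma> \<tau> :: "nat \<Rightarrow> nat"
  assumes sp: "\<sigma> permutes U" and tp: "\<tau> permutes U" and fin: "finite U"
    and E: "(\<lambda>i. {i, \<sigma> i}) ` U = (\<lambda>i. {i, \<tau> i}) ` U"
  shows "\<exists>g. g permutes U \<and> \<tau> = g \<circ> \<sigma> \<circ> Hilbert_Choice.inv g"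
proof -
  have "permutation \<sigma>" using sp fin permutation_permutes by blast
  then obtain N where N: "\<sigma> ^^ N = id" "N > 0" by (rule permutation_is_nilpotent)
  have pN: "\<sigma> ^^ (x + N * a) = \<sigma> ^^ x" for x a
  proof -
    have "\<sigma> ^^ (N * a) = id" by (metis N(1) funpow_mult id_funpow)
    thus ?thesis by (simp add: funpow_add)
  qed
  have sN1: "(\<sigma> ^^ (N - 1)) (\<sigma> x) = x" for x
  proof -
    have "(\<sigma> ^^ (N - 1)) (\<sigma> x) = (\<sigma> ^^ Suc (N - 1)) x"
      by (simp add: funpow_Suc_right del: funpow.simps)
    thus ?thesis using N by simp
  qed
  have inj: "inj \<sigma>" using sp by (rule permutes_inj)
  have injt: "inj \<tau>" using tp by (rule permutes_inj)
  have a: "\<tau> y = \<sigma> y \<or> \<sigma> (\<tau> y) = y" for y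
  proof (cases "y \<in> U")
    case True
    then have "{y, \<tau> y} \<in> (\<lambda>i. {i, \<sigma> i}) ` U" using E by blast
    then obtain i where "{i, \<sigma> i} = {y, \<tau> y}" by blast
    then show ?thesis by (auto simp: doubleton_eq_iff)
  next
    case False
    then show ?thesis using sp tp by (simp add: permutes_not_in)
  qed
  define R where "R = {y. \<tau> y \<noteq> \<sigma> y}"
  have RU: "R \<subseteq> U"
  proof
    fix x assume "x \<in> R"
    then have "\<tau> x \<noteq> \<sigma> x" unfolding R_def by simp
    then show "x \<in> U" using permutes_not_in[OF sp] permutes_not_in[OF tp] by metis
  qed
  have b: "\<sigma> y \<in> R" if "y \<in> R" for y
  proof (rule ccontr)
    assume c: "\<sigma> y \<notin> R"
    have ty: "\<tau> y \<noteq> \<sigma> y" using that R_def by auto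
    have sty: "\<sigma> (\<tau> y) = y" using a[of y] ty by auto
    have "y \<in> U" using that RU by auto
    then have "{y, \<sigma> y} \<in> (\<lambda>i. {i, \<tau> i}) ` U" using E by blast
    then obtain i where "{i, \<tau> i} = {y, \<sigma> y}" by blast
    then have "\<tau> y = \<sigma> y \<or> (i = \<sigma> y \<and> \<tau> (\<sigma> y) = y)" by (auto simp: doubleton_eq_iff)
    then have "\<tau> (\<sigma> y) = y" using ty by auto
    moreover have "\<tau> (\<sigma> y) = \<sigma> (\<sigma> y)" using c R_def by auto
    ultimately have "\<sigma> (\<tau> y) = \<sigma> (\<sigma> y)" using sty by simp
    then show False using inj ty by (simp add: inj_eq)
  qed
  have finR: "finite R" using RU fin finite_subset by blast
  have sR: "\<sigma> ` R = R"
    proof (rule endo_inj_surj[OF finR])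
    show "\<sigma> ` R \<subseteq> R" using b by blast
    show "inj_on \<sigma> R" using inj by (rule inj_on_subset) simp
  qed
  have Rc: "\<sigma> y \<in> R \<longleftrightarrow> y \<in> R" for y
  proof
    assume "\<sigma> y \<in> R"
    then obtain z where "z \<in> R" "\<sigma> y = \<sigma> z" using sR by (metis imageE)
    then show "y \<in> R" using inj by (simp add: inj_eq)
  qed (rule b)
  have Rpow: "(\<sigma> ^^ k) y \<in> R \<longleftrightarrow> y \<in> R" for k y
    by (induction k) (simp_all add: Rc)
  have tR: "\<tau> y = (\<sigma> ^^ (N - 1)) y" if "y \<in> R" for y
  proof -
    have "\<sigma> (\<tau> y) = y" using a[of y] that R_def by auto
    then show ?thesis using sN1[of "\<tau> y"] by simp
  qed
  define r where "r y = (LEAST z. \<exists>k. (\<sigma> ^^ k) z = y)" for y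
  have rex: "\<exists>k. (\<sigma> ^^ k) (r y) = y" for y
    unfolding r_def by (rule LeastI_ex) (rule exI[of _ y], rule exI[of _ 0], simp)
  have rinv: "r (\<sigma> y) = r y" for y
  proof -
    have "(\<exists>k. (\<sigma> ^^ k) z = \<sigma> y) \<longleftrightarrow> (\<exists>k. (\<sigma> ^^ k) z = y)" for z
    proof
      assume "\<exists>k. (\<sigma> ^^ k) z = \<sigma> y"
      then obtain k where k: "(\<sigma> ^^ k) z = \<sigma> y" by blast
      have "(\<sigma> ^^ (N - 1 + k)) z = (\<sigma> ^^ (N - 1)) ((\<sigma> ^^ k) z)" by (simp add: funpow_add)
      also have "\<dots> = y" using k sN1 by simp
      finally show "\<exists>k. (\<sigma> ^^ k) z = y" by blast
    next
      assume "\<exists>k. (\<sigma> ^^ k) z = y"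
      then obtain k where k: "(\<sigma> ^^ k) z = y" by blast
      then have "(\<sigma> ^^ Suc k) z = \<sigma> y" by simp
      then show "\<exists>k. (\<sigma> ^^ k) z = \<sigma> y" by blast
    qed
    then show ?thesis unfolding r_def by simp
  qed
  have rpow: "r ((\<sigma> ^^ m) y) = r y" for m y
    by (induction m) (simp_all add: rinv)
  define D where "D y = (LEAST k. (\<sigma> ^^ k) (r y) = y)" for y
  have Dp: "(\<sigma> ^^ D y) (r y) = y" for y
    unfolding D_def using rex by (rule LeastI_ex)
  define g where "g y = (if y \<in> R then (\<sigma> ^^ ((N - 1) * D y)) (r y) else y)" for y
  have wd: "(\<sigma> ^^ ((N - 1) * a)) u = (\<sigma> ^^ ((N - 1) * b)) u"
    if h: "(\<sigma> ^^ a) u = (\<sigma> ^^ b) u" for a b u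
  proof -
    define c where "c = (N - 1) * (a + b)"
    have e1: "c + a = (N - 1) * b + N * a" and e2: "c + b = (N - 1) * a + N * b"
      using N(2) unfolding c_def by (cases N; simp add: algebra_simps)+
    have "(\<sigma> ^^ ((N - 1) * b)) u = (\<sigma> ^^ (c + a)) u" using e1 pN by simp
    also have "\<dots> = (\<sigma> ^^ c) ((\<sigma> ^^ a) u)" by (simp add: funpow_add)
    also have "\<dots> = (\<sigma> ^^ c) ((\<sigma> ^^ b) u)" using h by simp
    also have "\<dots> = (\<sigma> ^^ (c + b)) u" by (simp add: funpow_add)
    also have "\<dots> = (\<sigma> ^^ ((N - 1) * a)) u" using e2 pN by simp
    finally show ?thesis by simp
  qed
  have gwd: "g y = (\<sigma> ^^ ((N - 1) * j)) (r y)" if "y \<in> R" "(\<sigma> ^^ j) (r y) = y" for y j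
    using wd[of "D y" "r y" j] Dp[of y] that unfolding g_def by simp
  have rR: "r y \<in> R" if "y \<in> R" for y
    using Rpow[of "D y" "r y"] Dp[of y] that by simp
  have gR: "g y \<in> R" if "y \<in> R" for y
    using that rR[OF that] Rpow unfolding g_def by simp
  have rr: "r (r y) = r y" for y
    using rpow[of "D y" "r y"] Dp[of y] by simp
  have rg: "r (g y) = r y" if "y \<in> R" for y
    using that rpow rr unfolding g_def by simp
  have sq: "\<sigma> ^^ ((N - 1) * ((N - 1) * k)) = \<sigma> ^^ k" for k
  proof (cases "N = 1")
    case True
    then have "\<sigma> = id" using N(1) by simp
    then show ?thesis by simp
  next
    case False
    then obtain M where M: "N = Suc (Suc M)" using N(2) by (cases N; cases "N - 1"; simp)
    have eq: "(N - 1) * ((N - 1) * k) = k + N * (M * k)" unfolding M by (simp add: algebra_simps)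
    have "\<sigma> ^^ ((N - 1) * ((N - 1) * k)) = \<sigma> ^^ (k + N * (M * k))" by (simp only: eq)
    also have "\<dots> = \<sigma> ^^ k" by (rule pN)
    finally show ?thesis .
  qed
  have gg: "g (g y) = y" for y
  proof (cases "y \<in> R")
    case True
    have "(\<sigma> ^^ ((N - 1) * D y)) (r (g y)) = g y" using rg[OF True] True unfolding g_def by simp
    then have "g (g y) = (\<sigma> ^^ ((N - 1) * ((N - 1) * D y))) (r (g y))"
      using gwd gR[OF True] by blast
    also have "\<dots> = y" using sq rg[OF True] Dp[of y] by simp
    finally show ?thesis .
  next
    case False
    then show ?thesis unfolding g_def by simp
  qed
  have comm: "g (\<sigma> y) = \<tau> (g y)" for y
  proof (cases "y \<in> R")
    case True
    have sy: "\<sigma> y \<in> R" using True Rc by simp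
    have "(\<sigma> ^^ Suc (D y)) (r (\<sigma> y)) = \<sigma> y" using Dp[of y] rinv by simp
    then have "g (\<sigma> y) = (\<sigma> ^^ ((N - 1) * Suc (D y))) (r (\<sigma> y))" using gwd sy by blast
    also have "\<dots> = (\<sigma> ^^ (N - 1)) ((\<sigma> ^^ ((N - 1) * D y)) (r y))"
      by (simp add: rinv funpow_add)
    also have "\<dots> = (\<sigma> ^^ (N - 1)) (g y)" using True unfolding g_def by simp
    also have "\<dots> = \<tau> (g y)" using tR gR True by simp
    finally show ?thesis .
  next
    case False
    then have "\<sigma> y \<notin> R" using Rc by simp
    then show ?thesis using False unfolding g_def R_def by simp
  qed
  have gU: "g y = y" if "y \<notin> U" for y using that RU unfolding g_def by auto
  have gperm: "g permutes U"
  proof (rule bij_imp_permutes)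
    show "bij_betw g U U"
    proof (rule bij_betw_byWitness[where f' = g])
      show "g ` U \<subseteq> U" using gR RU unfolding g_def by auto
    qed (use gg gR RU in \<open>auto simp: g_def\<close>)
  qed (rule gU)
  have ig: "Hilbert_Choice.inv g = g"
    by (rule inv_unique_comp) (auto simp: gg)
  have "\<tau> = g \<circ> \<sigma> \<circ> g"
  proof
    fix x
    have "\<tau> x = \<tau> (g (g x))" using gg by simp
    also have "\<dots> = g (\<sigma> (g x))" using comm by simp
    finally show "\<tau> x = (g \<circ> \<sigma> \<circ> g) x" by simp
  qed
  then show ?thesis using gperm ig by metis
qed



lemma prod01:
  assumes "finite I"
  shows "(\<Prod>i\<in>I. if Q i then 1 else (0::complex)) = (if \<forall>i\<in>I. Q i then 1 else 0)"
proof (cases "\<forall>i\<in>I. Q i")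
  case True
  then show ?thesis by simp
next
  case False
  then obtain i where "i \<in> I" "\<not> Q i" by blast
  then show ?thesis using assms False by (simp add: prod_zero_iff)
qed

theorem mainTheorem9:
  fixes n :: nat and \<phi> \<psi> :: "(nat \<Rightarrow> nat) \<Rightarrow> complex"
  assumes "n \<ge> 1" and "is_character n \<phi>" and "is_character n \<psi>"
  shows "(\<forall>A \<in> carrier_mat n n. transpose_mat A = A \<longrightarrow> gen_mat_fun n \<phi> A = gen_mat_fun n \<psi> A)
         \<longleftrightarrow> (\<forall>\<sigma>. \<sigma> permutes {..<n} \<longrightarrow> \<phi> \<sigma> = \<psi> \<sigma>)"
proof
  assume "\<forall>\<sigma>. \<sigma> permutes {..<n} \<longrightarrow> \<phi> \<sigma> = \<psi> \<sigma>"
  then show "\<forall>A \<in> carrier_mat n n. transpose_mat A = A \<longrightarrow> gen_mat_fun n \<phi> A = gen_mat_fun n \<psi> A"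
    unfolding gen_mat_fun_def by (auto intro!: sum.cong)
next
  assume H: "\<forall>A \<in> carrier_mat n n. transpose_mat A = A \<longrightarrow> gen_mat_fun n \<phi> A = gen_mat_fun n \<psi> A"
  define P where "P = {\<sigma>. \<sigma> permutes {..<n}}"
  have finP: "finite P" unfolding P_def by (rule finite_permutations) simp
  define edges where "edges \<tau> = (\<lambda>i. {i, \<tau> i}) ` {..<n}" for \<tau> :: "nat \<Rightarrow> nat"
  define c where "c \<tau> = \<phi> \<tau> - \<psi> \<tau>" for \<tau>
  have F: "sum c {\<tau>\<in>P. edges \<tau> \<subseteq> E} = 0" for E
  proof -
    define A :: "complex mat" where "A = mat n n (\<lambda>(i,j). if {i,j} \<in> E then 1 else 0)"
    have Ac: "A \<in> carrier_mat n n" unfolding A_def by simp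
    have At: "transpose_mat A = A"
      by (rule eq_matI) (auto simp: A_def insert_commute)
    have pr: "(\<Prod>i<n. A $$ (i, \<tau> i)) = (if edges \<tau> \<subseteq> E then 1 else 0)" if "\<tau> \<in> P" for \<tau>
    proof -
      have "\<tau> i < n" if "i < n" for i using \<open>\<tau> \<in> P\<close> that unfolding P_def
        by (metis lessThan_iff permutes_in_image mem_Collect_eq)
      then have "(\<Prod>i<n. A $$ (i, \<tau> i)) = (\<Prod>i<n. if {i, \<tau> i} \<in> E then 1 else 0)"
        by (intro prod.cong) (auto simp: A_def)
      also have "\<dots> = (if \<forall>i\<in>{..<n}. {i, \<tau> i} \<in> E then 1 else 0)" by (rule prod01) simp
      also have "\<dots> = (if edges \<tau> \<subseteq> E then 1 else 0)" unfolding edges_def by auto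
      finally show ?thesis .
    qed
    have "gen_mat_fun n \<phi> A = gen_mat_fun n \<psi> A" using H Ac At by blast
    then have "(\<Sum>\<tau>\<in>P. \<phi> \<tau> * (if edges \<tau> \<subseteq> E then 1 else 0)) = (\<Sum>\<tau>\<in>P. \<psi> \<tau> * (if edges \<tau> \<subseteq> E then 1 else 0))"
      unfolding gen_mat_fun_def P_def[symmetric] by (simp add: pr cong: sum.cong)
    then have "(\<Sum>\<tau>\<in>P. (if edges \<tau> \<subseteq> E then c \<tau> else 0)) = 0"
      unfolding c_def
    proof -
      assume a: "(\<Sum>\<tau>\<in>P. \<phi> \<tau> * (if edges \<tau> \<subseteq> E then 1 else 0)) = (\<Sum>\<tau>\<in>P. \<psi> \<tau> * (if edges \<tau> \<subseteq> E then 1 else 0))"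
      have "(\<Sum>\<tau>\<in>P. (if edges \<tau> \<subseteq> E then \<phi> \<tau> - \<psi> \<tau> else 0)) =
        (\<Sum>\<tau>\<in>P. \<phi> \<tau> * (if edges \<tau> \<subseteq> E then 1 else 0) - \<psi> \<tau> * (if edges \<tau> \<subseteq> E then 1 else 0))"
        by (rule sum.cong) auto
      also have "\<dots> = 0" using a by (simp only: sum_subtractf) simp
      finally show "(\<Sum>\<tau>\<in>P. (if edges \<tau> \<subseteq> E then \<phi> \<tau> - \<psi> \<tau> else 0)) = 0" .
    qed
    then show ?thesis by (simp add: sum.inter_filter[OF finP])
  qed
  have G: "sum c {\<tau>\<in>P. edges \<tau> = E} = 0" if "finite E" for E
    using that
  proof (induction "card E" arbitrary: E rule: less_induct)
    case less
    let ?S = "{\<tau>\<in>P. edges \<tau> \<subseteq> E}"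
    have finS: "finite ?S" using finP by simp
    have "0 = sum c ?S" using F[of E] by simp
    also have "\<dots> = (\<Sum>E'\<in>edges ` ?S. sum c {\<tau>\<in>?S. edges \<tau> = E'})"
      by (rule sum.image_gen[OF finS])
    also have "\<dots> = (\<Sum>E'\<in>edges ` ?S. (if E' = E then sum c {\<tau>\<in>P. edges \<tau> = E} else 0))"
    proof (rule sum.cong[OF refl])
      fix E' assume "E' \<in> edges ` ?S"
      then have sub: "E' \<subseteq> E" by auto
      have eqs: "{\<tau>\<in>?S. edges \<tau> = E'} = {\<tau>\<in>P. edges \<tau> = E'}" using sub by auto
      show "sum c {\<tau>\<in>?S. edges \<tau> = E'} = (if E' = E then sum c {\<tau>\<in>P. edges \<tau> = E} else 0)"
      proof (cases "E' = E")
        case True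
        then show ?thesis using eqs by simp
      next
        case False
        then have "E' \<subset> E" using sub by auto
        then have "card E' < card E" using less.prems by (rule psubset_card_mono[rotated])
        moreover have "finite E'" using sub less.prems finite_subset by blast
        ultimately have "sum c {\<tau>\<in>P. edges \<tau> = E'} = 0" using less.hyps by blast
        then show ?thesis using eqs False by simp
      qed
    qed
    also have "\<dots> = (if E \<in> edges ` ?S then sum c {\<tau>\<in>P. edges \<tau> = E} else 0)"
      by (rule sum.delta[OF finite_imageI[OF finS]])
    finally have h: "(if E \<in> edges ` ?S then sum c {\<tau>\<in>P. edges \<tau> = E} else 0) = 0" by simp
    show ?case
    proof (cases "E \<in> edges ` ?S")
      case True
      then show ?thesis using h by simp
    next
      case False
      then have "{\<tau>\<in>P. edges \<tau> = E} = {}" by auto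
      then show ?thesis by (simp only: sum.empty)
    qed
  qed
  show "\<forall>\<sigma>. \<sigma> permutes {..<n} \<longrightarrow> \<phi> \<sigma> = \<psi> \<sigma>"
  proof (intro allI impI)
    fix \<sigma> assume sp: "\<sigma> permutes {..<n}"
    let ?T = "{\<tau>\<in>P. edges \<tau> = edges \<sigma>}"
    have ct: "c \<tau> = c \<sigma>" if "\<tau> \<in> ?T" for \<tau>
    proof -
      have tp: "\<tau> permutes {..<n}" and e: "edges \<sigma> = edges \<tau>" using that unfolding P_def by auto
      obtain g where g: "g permutes {..<n}" "\<tau> = g \<circ> \<sigma> \<circ> Hilbert_Choice.inv g"
        using edges_conj[OF sp tp _ e[unfolded edges_def]] by blast
      show ?thesis unfolding c_def g(2)
        using character_class[OF assms(2) g(1) sp] character_class[OF assms(3) g(1) sp] by simp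
    qed
    have "finite (edges \<sigma>)" unfolding edges_def by simp
    then have "0 = sum c ?T" using G by simp
    also have "\<dots> = of_nat (card ?T) * c \<sigma>" using ct by simp
    finally have "of_nat (card ?T) * c \<sigma> = 0" by simp
    moreover have "card ?T \<noteq> 0" using finP sp unfolding P_def by (auto simp: card_eq_0_iff)
    ultimately have "c \<sigma> = 0" by simp
    then show "\<phi> \<sigma> = \<psi> \<sigma>" unfolding c_def by simp
  qed
qed

end
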